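(* For every $m>0$, the Lévy measure $n^m$ is the push-forward of $n^0$ under $\phi_m$: $n^m(B)=n^0(\{z\in\mathbb{R}^d\setminus\{0\}:\phi_m(z)\in B\})$ for every Borel set $B\subset\mathbb{R}^d\setminus\{0\}$.
   Context: Let $d\ge1$. For $m>0$, $n^m(dy)=n^m(|y|)dy$ on $\mathbb{R}^d\setminus\{0\}$ with $n^m(r)=2\left(\frac{m}{2\pi}\right)^{(d+1)/2}\frac{K_{(d+1)/2}(mr)}{r^{(d+1)/2}}$, where $K_\nu$ is the modified Bessel function of the third kind, and $n^0(dy)=\frac{\Gamma((d+1)/2)}{\pi^{(d+1)/2}}|y|^{-(d+1)}dy$. For $m>0$ and $r>0$ let $l_m(r)=2^{\frac{d-1}{2}}\Gamma(\frac{d+1}{2})\big/\big(m^{\frac{d+1}{2}}\int_r^\infty u^{\frac{d-3}{2}}K_{\frac{d+1}{2}}(mu)\,du\big)$, a strictly increasing bijection of $(0,\infty)$, and $\phi_m(z)=l_m^{-1}(|z|)\frac{z}{|z|}$ for $z\ne0$. *)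

theory Defs
  imports "HOL-Analysis.Analysis"
begin

text \<open>Modified Bessel function of the third kind (Macdonald function), via its
standard integral representation, valid for x > 0:
  K_nu(x) = integral over t in [0,inf) of exp(-x cosh t) cosh(nu t).\<close>
definition besselK :: "real \<Rightarrow> real \<Rightarrow> real" where
  "besselK \<nu> x = (LBINT t:{0..}. exp (- x * cosh t) * cosh (\<nu> * t))"

definition levy_density_m :: "nat \<Rightarrow> real \<Rightarrow> real \<Rightarrow> real" where
  "levy_density_m d m r =
     2 * (m / (2 * pi)) powr ((real d + 1) / 2) * besselK ((real d + 1) / 2) (m * r)
       / r powr ((real d + 1) / 2)"

definition levy_density_0 :: "nat \<Rightarrow> real \<Rightarrow> real" where
  "levy_density_0 d r = Gamma ((real d + 1) / 2) / pi powr ((real d + 1) / 2)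
       * r powr (- (real d + 1))"

definition levy_m :: "real \<Rightarrow> 'a::euclidean_space measure" where
  "levy_m m = density lborel
     (\<lambda>y. if y = 0 then 0 else ennreal (levy_density_m DIM('a) m (norm y)))"

definition levy_0 :: "'a::euclidean_space measure" where
  "levy_0 = density lborel
     (\<lambda>y. if y = 0 then 0 else ennreal (levy_density_0 DIM('a) (norm y)))"

definition l_fun :: "nat \<Rightarrow> real \<Rightarrow> real \<Rightarrow> real" where
  "l_fun d m r = 2 powr ((real d - 1) / 2) * Gamma ((real d + 1) / 2)
     / (m powr ((real d + 1) / 2) *
        (LBINT u:{r<..}. u powr ((real d - 3) / 2) * besselK ((real d + 1) / 2) (m * u)))"

definition phi_fun :: "real \<Rightarrow> 'a::euclidean_space \<Rightarrow> 'a" where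
  "phi_fun m z = (if z = 0 then 0 else
     (inv_into {0<..} (l_fun DIM('a) m) (norm z) / norm z) *\<^sub>R z)"

end

theory Submission
  imports Defs "HOL-Analysis.Analysis"
begin


lemma measurable_cosh_real[measurable]: "(cosh :: real \<Rightarrow> real) \<in> borel_measurable borel"
  by (rule borel_measurable_continuous_onI) (intro continuous_intros)

lemma besselK_meas[measurable]: "besselK \<nu> \<in> borel_measurable borel"
  unfolding besselK_def set_lebesgue_integral_def by measurable

definition kint :: "real \<Rightarrow> real \<Rightarrow> ennreal" where
  "kint \<nu> y = (\<integral>\<^sup>+ t. ennreal (indicator {0..} t * (exp (- y * cosh t) * cosh (\<nu> * t))) \<partial>lborel)"

lemma besselK_kint: "besselK \<nu> y = enn2real (kint \<nu> y)"
  unfolding besselK_def set_lebesgue_integral_def kint_def real_scaleR_def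
  by (rule integral_eq_nn_integral) (auto simp: indicator_def)

lemma cosh_le_exp: fixes t :: real assumes "t \<ge> 0" shows "cosh t \<le> exp t"
proof -
  have "exp (-t) \<le> 1" using assms by simp
  moreover have "1 \<le> exp t" using assms by simp
  ultimately show ?thesis unfolding cosh_def by simp
qed

lemma cosh_ge_exp: fixes t :: real shows "exp t / 2 \<le> cosh t"
  unfolding cosh_def by (simp add: divide_simps)

lemma cosh_ge_quad: fixes t :: real assumes "t \<ge> 0" shows "1 + t^2/8 \<le> cosh t"
proof -
  have "exp t = exp (t/2)^2" by (simp add: power2_eq_square flip: exp_add)
  also have "\<dots> \<ge> (1 + t/2)^2" using exp_ge_add_one_self[of "t/2"] assms
    by (intro power_mono) auto
  finally have 1: "exp t \<ge> (1+t/2)^2" .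
  have 2: "exp (-t) \<ge> 1 - t" using exp_ge_add_one_self[of "-t"] by simp
  show ?thesis unfolding cosh_def using 1 2 by (simp add: power2_eq_square field_simps)
qed

lemma kf_upper:
  fixes y0 y \<nu> t :: real
  assumes "0 < y0" "y0 \<le> y" "0 \<le> \<nu>" "0 \<le> t"
  shows "exp (- y * cosh t) * cosh (\<nu> * t) \<le> exp (2*(\<nu>+1)^2/y0) * exp (-y) * exp (-1*t)"
proof -
  have c1: "cosh (\<nu>*t) \<le> exp (\<nu>*t)" using assms by (intro cosh_le_exp) auto
  have "y * (1 + t^2/8) \<le> y * cosh t" using cosh_ge_quad[OF assms(4)] assms by (intro mult_left_mono) auto
  moreover have "y0 * t^2/8 \<le> y * t^2/8" using assms by (intro divide_right_mono mult_right_mono) auto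
  ultimately have c2: "- y * cosh t \<le> - y - y0 * t^2/8" by (simp add: algebra_simps)
  have q: "0 \<le> (y0*t - 4*(\<nu>+1))^2 / (8*y0)" using assms by simp
  have c3: "- y0 * t^2/8 + \<nu>*t \<le> 2*(\<nu>+1)^2/y0 - t"
    using q assms by (simp add: power2_eq_square field_simps)
  have "exp (- y * cosh t) * cosh (\<nu> * t) \<le> exp (- y - y0 * t^2/8) * exp (\<nu>*t)"
    using c1 c2 by (intro mult_mono) auto
  also have "\<dots> = exp (-y + (- y0 * t^2/8 + \<nu>*t))" by (simp flip: exp_add)
  also have "\<dots> \<le> exp (-y + (2*(\<nu>+1)^2/y0 - t))" using c3 by simp
  also have "\<dots> = exp (2*(\<nu>+1)^2/y0) * exp (-y) * exp (-1*t)" by (simp flip: exp_add)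
  finally show ?thesis .
qed

lemma nn_integral_exp_minus:
  fixes C :: real assumes "C \<ge> 0"
  shows "(\<integral>\<^sup>+ t. ennreal (indicator {0..} t * (C * exp (-1*t))) \<partial>lborel) = ennreal C"
proof -
  have "((\<lambda>t. C * exp (-1*t)) has_integral C * (exp (-1*0)/1)) {0..}"
    by (intro has_integral_mult_right has_integral_exp_minus_to_infinity) auto
  from nn_integral_has_integral_lebesgue[OF _ this] assms show ?thesis by simp
qed

lemma kint_upper:
  assumes "0 < y0" "y0 \<le> y" "0 \<le> \<nu>"
  shows "kint \<nu> y \<le> ennreal (exp (2*(\<nu>+1)^2/y0) * exp (-y))"
proof -
  have "kint \<nu> y \<le> (\<integral>\<^sup>+ t. ennreal (indicator {0..} t * (exp (2*(\<nu>+1)^2/y0) * exp (-y) * exp (-1*t))) \<partial>lborel)"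
    unfolding kint_def
    by (intro nn_integral_mono ennreal_leI) (use kf_upper[OF assms] in \<open>auto simp: indicator_def\<close>)
  also have "\<dots> = ennreal (exp (2*(\<nu>+1)^2/y0) * exp (-y))"
    by (rule nn_integral_exp_minus) simp
  finally show ?thesis .
qed

lemma kint_lower_small:
  assumes "0 < y" "y \<le> exp (-1)" "0 \<le> \<nu>"
  shows "ennreal (exp (-1-\<nu>)/2 * y powr (-\<nu>)) \<le> kint \<nu> y"
proof -
  define T where "T = - ln y"
  have "ln y \<le> ln (exp (-1))" using assms by (subst ln_le_cancel_iff) auto
  hence T1: "1 \<le> T" unfolding T_def by simp
  have eT: "exp T = 1/y" using assms by (simp add: T_def exp_minus divide_inverse)
  define c where "c = exp (-1-\<nu>)/2 * y powr (-\<nu>)"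
  have pw: "exp (\<nu>*T) = y powr (-\<nu>)" using assms by (simp add: T_def powr_def)
  have pt: "c \<le> exp (- y * cosh t) * cosh (\<nu> * t)" if t: "T-1 \<le> t" "t \<le> T" for t
  proof -
    have t0: "0 \<le> t" using t T1 by simp
    have "y * cosh t \<le> y * exp t" using cosh_le_exp[OF t0] assms by simp
    also have "\<dots> \<le> y * exp T" using t assms by simp
    also have "\<dots> = 1" using eT assms by simp
    finally have a: "exp (-1) \<le> exp (- y * cosh t)" by simp
    have "exp (\<nu>*(T-1)) / 2 \<le> exp (\<nu>*t) / 2" using t assms by (simp add: mult_left_mono)
    also have "\<dots> \<le> cosh (\<nu>*t)" by (rule cosh_ge_exp)
    finally have b: "exp (\<nu>*(T-1)) / 2 \<le> cosh (\<nu>*t)" .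
    have e: "exp (-1) * exp (\<nu>*(T-1)) = exp(-1-\<nu>) * exp (\<nu>*T)"
      by (simp add: exp_add[symmetric] algebra_simps)
    have "c = exp (-1) * (exp (\<nu>*(T-1)) / 2)"
      unfolding c_def pw[symmetric] using e by simp
    also have "\<dots> \<le> exp (- y * cosh t) * cosh (\<nu> * t)"
      using a b by (intro mult_mono) auto
    finally show ?thesis .
  qed
  have "ennreal c = (\<integral>\<^sup>+ t. ennreal c * indicator {T-1..T} t \<partial>lborel)"
    by (simp add: nn_integral_cmult_indicator)
  also have "\<dots> \<le> kint \<nu> y" unfolding kint_def
  proof (intro nn_integral_mono)
    fix t show "ennreal c * indicator {T-1..T} t \<le> ennreal (indicator {0..} t * (exp (- y * cosh t) * cosh (\<nu> * t)))"
      using pt[of t] T1 by (cases "t \<in> {T-1..T}") (auto simp: indicator_def intro!: ennreal_leI)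
  qed
  finally show ?thesis by (simp add: c_def)
qed

lemma kint_pos:
  assumes "0 < y" "0 \<le> \<nu>"
  shows "ennreal (exp (- y * cosh 1)) \<le> kint \<nu> y"
proof -
  have pt: "exp (- y * cosh 1) \<le> exp (- y * cosh t) * cosh (\<nu> * t)" if t: "0 \<le> t" "t \<le> 1" for t
  proof -
    have "cosh t \<le> cosh 1" using t by (simp add: cosh_real_nonneg_le_iff)
    hence "exp (- y * cosh 1) \<le> exp (- y * cosh t)" using assms by simp
    also have "\<dots> \<le> exp (- y * cosh t) * cosh (\<nu> * t)" using cosh_real_ge_1[of "\<nu>*t"] by simp
    finally show ?thesis .
  qed
  have "ennreal (exp (- y * cosh 1)) = (\<integral>\<^sup>+ t. ennreal (exp (- y * cosh 1)) * indicator {0..1::real} t \<partial>lborel)"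
    by (subst nn_integral_cmult_indicator) (auto simp: emeasure_lborel_Icc)
  also have "\<dots> \<le> kint \<nu> y" unfolding kint_def
    using pt by (intro nn_integral_mono) (auto simp: indicator_def intro!: ennreal_leI)
  finally show ?thesis .
qed

lemma pow_exp_bound:
  fixes \<nu> m u :: real assumes "0 < \<nu>" "0 < m" "0 < u"
  shows "u powr \<nu> * exp (-m*u) \<le> (\<nu>/(exp 1*m)) powr \<nu>"
proof -
  define s where "s = m*u/\<nu>"
  have s0: "0 < s" using assms by (simp add: s_def)
  have "s \<le> exp (s - 1)" using exp_ge_add_one_self[of "s-1"] by simp
  hence es: "exp 1 * s \<le> exp s" by (simp add: exp_diff field_simps)
  have "(exp 1 * s) powr \<nu> \<le> exp s powr \<nu>" using es s0 assms by (intro powr_mono2) auto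
  also have "exp s powr \<nu> = exp (m*u)" using assms by (simp add: powr_def s_def)
  finally have 1: "(exp 1 * m / \<nu>) powr \<nu> * u powr \<nu> \<le> exp (m*u)"
    using assms by (simp add: s_def powr_mult[symmetric] mult.assoc)
  have p: "0 < (exp 1 * m / \<nu>) powr \<nu>" using assms by simp
  have "u powr \<nu> \<le> exp (m*u) / (exp 1 * m / \<nu>) powr \<nu>"
    using 1 p by (simp add: field_simps)
  also have "\<dots> = exp (m*u) * (\<nu>/(exp 1*m)) powr \<nu>"
    using assms by (simp add: powr_divide divide_simps)
  finally show ?thesis by (simp add: exp_minus field_simps)
qed

lemma nn_integral_powr_m2:
  fixes x :: real assumes "0 < x"
  shows "(\<integral>\<^sup>+ u. ennreal (indicator {x<..} u * u powr (-2)) \<partial>lborel) = ennreal (1/x)"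
proof -
  have "((\<lambda>u. u powr (-2)) has_integral - (x powr (-2+1)) / (-2+1)) {x..}"
    using assms by (intro has_integral_powr_to_inf) auto
  hence "((\<lambda>u. u powr (-2)) has_integral 1/x) {x..}" using assms by (simp add: powr_minus divide_inverse)
  hence "((\<lambda>u. u powr (-2)) has_integral 1/x) {x<..}"
    by (rule has_integral_spike_set_eq[THEN iffD1, rotated 2])
       (auto intro: negligible_subset[of "{x}"])
  from nn_integral_has_integral_lebesgue[OF _ this] show ?thesis by simp
qed

lemma besselK_nonneg: "0 \<le> besselK \<nu> y"
  by (simp add: besselK_kint)

lemma ennreal_besselK: assumes "0 < y" "0 \<le> \<nu>" shows "ennreal (besselK \<nu> y) = kint \<nu> y"
proof -
  have "kint \<nu> y \<le> ennreal (exp (2*(\<nu>+1)^2/y) * exp (-y))"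
    by (rule kint_upper) (use assms in auto)
  also have "\<dots> < \<infinity>" by simp
  finally have "kint \<nu> y < \<infinity>" .
  thus ?thesis by (simp add: besselK_kint less_top)
qed

lemma besselK_upper:
  assumes "0 < y0" "y0 \<le> y" "0 \<le> \<nu>"
  shows "besselK \<nu> y \<le> exp (2*(\<nu>+1)^2/y0) * exp (-y)"
proof -
  have "besselK \<nu> y = enn2real (kint \<nu> y)" by (rule besselK_kint)
  also have "\<dots> \<le> enn2real (ennreal (exp (2*(\<nu>+1)^2/y0) * exp (-y)))"
    using kint_upper[OF assms] by (intro enn2real_mono) auto
  finally show ?thesis by simp
qed

lemma besselK_lower_small:
  assumes "0 < y" "y \<le> exp (-1)" "0 \<le> \<nu>"
  shows "exp (-1-\<nu>)/2 * y powr (-\<nu>) \<le> besselK \<nu> y"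
proof -
  have "ennreal (exp (-1-\<nu>)/2 * y powr (-\<nu>)) \<le> ennreal (besselK \<nu> y)"
    using kint_lower_small[OF assms] ennreal_besselK[of y \<nu>] assms by simp
  thus ?thesis using besselK_nonneg by (subst (asm) ennreal_le_iff) auto
qed

lemma besselK_pos:
  assumes "0 < y" "0 \<le> \<nu>"
  shows "exp (- y * cosh 1) \<le> besselK \<nu> y"
proof -
  have "ennreal (exp (- y * cosh 1)) \<le> ennreal (besselK \<nu> y)"
    using kint_pos[OF assms] ennreal_besselK[of y \<nu>] assms by simp
  thus ?thesis using besselK_nonneg by (subst (asm) ennreal_le_iff) auto
qed

definition gfun :: "real \<Rightarrow> real \<Rightarrow> real \<Rightarrow> real" where
  "gfun \<nu> m u = u powr (\<nu> - 2) * besselK \<nu> (m*u)"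

definition Ie :: "real \<Rightarrow> real \<Rightarrow> real \<Rightarrow> ennreal" where
  "Ie \<nu> m x = (\<integral>\<^sup>+ u. ennreal (indicator {x<..} u * gfun \<nu> m u) \<partial>lborel)"

definition Ireal :: "real \<Rightarrow> real \<Rightarrow> real \<Rightarrow> real" where
  "Ireal \<nu> m x = (LBINT u:{x<..}. gfun \<nu> m u)"

lemma gfun_meas[measurable]: "gfun \<nu> m \<in> borel_measurable borel"
  unfolding gfun_def by measurable

lemma gfun_nonneg: "0 \<le> gfun \<nu> m u"
  by (simp add: gfun_def besselK_nonneg)

definition Cb :: "real \<Rightarrow> real \<Rightarrow> real \<Rightarrow> real" where
  "Cb \<nu> m x = exp (2*(\<nu>+1)^2/(m*x)) * (\<nu>/(exp 1*m)) powr \<nu>"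


context
  fixes \<nu> m :: real
  assumes nu: "1 \<le> \<nu>" and m: "0 < m"
begin

lemma Cb_pos: "0 < Cb \<nu> m x" using nu m by (simp add: Cb_def)

lemma g_upper:
  assumes "0 < x" "x \<le> u"
  shows "gfun \<nu> m u \<le> Cb \<nu> m x * u powr (-2)"
proof -
  have u: "0 < u" using assms by simp
  have K: "besselK \<nu> (m*u) \<le> exp (2*(\<nu>+1)^2/(m*x)) * exp (-(m*u))"
    using assms m nu by (intro besselK_upper) (auto intro: mult_left_mono)
  have "gfun \<nu> m u \<le> u powr (\<nu> - 2) * (exp (2*(\<nu>+1)^2/(m*x)) * exp (-(m*u)))"
    unfolding gfun_def using K by (intro mult_left_mono) auto
  also have "\<dots> = exp (2*(\<nu>+1)^2/(m*x)) * u powr (-2) * (u powr \<nu> * exp (-m*u))"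
    using u by (simp add: powr_add[symmetric] algebra_simps)
  also have "\<dots> \<le> exp (2*(\<nu>+1)^2/(m*x)) * u powr (-2) * ((\<nu>/(exp 1*m)) powr \<nu>)"
    using pow_exp_bound[of \<nu> m u] nu m u by (intro mult_left_mono) auto
  finally show ?thesis by (simp add: Cb_def algebra_simps)
qed

lemma Ie_upper:
  assumes "0 < x"
  shows "Ie \<nu> m x \<le> ennreal (Cb \<nu> m x / x)"
proof -
  have "Ie \<nu> m x \<le> (\<integral>\<^sup>+ u. ennreal (Cb \<nu> m x) * ennreal (indicator {x<..} u * u powr (-2)) \<partial>lborel)"
    unfolding Ie_def using g_upper assms Cb_pos[of x]
    by (intro nn_integral_mono) (auto simp: indicator_def simp flip: ennreal_mult intro!: ennreal_leI)
  also have "\<dots> = ennreal (Cb \<nu> m x) * ennreal (1/x)"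
    by (subst nn_integral_cmult) (auto simp: nn_integral_powr_m2 assms)
  also have "\<dots> = ennreal (Cb \<nu> m x / x)" using Cb_pos[of x] assms
    by (simp add: ennreal_mult[symmetric] divide_inverse)
  finally show ?thesis .
qed

lemma Ie_finite: assumes "0 < x" shows "Ie \<nu> m x < \<infinity>"
proof -
  have "Ie \<nu> m x \<le> ennreal (Cb \<nu> m x / x)" by (rule Ie_upper[OF assms])
  also have "\<dots> < \<infinity>" by simp
  finally show ?thesis .
qed

lemma Ireal_eq: "Ireal \<nu> m x = enn2real (Ie \<nu> m x)"
  unfolding Ireal_def Ie_def set_lebesgue_integral_def real_scaleR_def
  by (rule integral_eq_nn_integral) (auto simp: gfun_nonneg)

lemma ennreal_Ireal: "0 < x \<Longrightarrow> ennreal (Ireal \<nu> m x) = Ie \<nu> m x"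
  using Ie_finite by (simp add: Ireal_eq less_top)

definition J :: "real \<Rightarrow> real \<Rightarrow> ennreal" where
  "J x y = (\<integral>\<^sup>+ u. ennreal (indicator {x<..y} u * gfun \<nu> m u) \<partial>lborel)"

lemma Ie_split:
  assumes "x \<le> y" shows "Ie \<nu> m x = J x y + Ie \<nu> m y"
proof -
  have "Ie \<nu> m x = (\<integral>\<^sup>+ u. ennreal (indicator {x<..y} u * gfun \<nu> m u) + ennreal (indicator {y<..} u * gfun \<nu> m u) \<partial>lborel)"
    unfolding Ie_def using assms
    by (intro nn_integral_cong) (auto simp: indicator_def gfun_nonneg)
  also have "\<dots> = J x y + Ie \<nu> m y" unfolding J_def Ie_def
    by (rule nn_integral_add) auto
  finally show ?thesis .
qed

lemma J_upper:
  assumes "0 < x0" "x0 \<le> x" "x \<le> y"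
  shows "J x y \<le> ennreal (Cb \<nu> m x0 * x0 powr (-2) * (y - x))"
proof -
  have "J x y \<le> (\<integral>\<^sup>+ u. ennreal (Cb \<nu> m x0 * x0 powr (-2)) * indicator {x<..y} u \<partial>lborel)"
    unfolding J_def
  proof (intro nn_integral_mono)
    fix u show "ennreal (indicator {x<..y} u * gfun \<nu> m u) \<le> ennreal (Cb \<nu> m x0 * x0 powr (-2)) * indicator {x<..y} u"
    proof (cases "u \<in> {x<..y}")
      case True
      have "gfun \<nu> m u \<le> Cb \<nu> m x0 * u powr (-2)" using True assms by (intro g_upper) auto
      also have "\<dots> \<le> Cb \<nu> m x0 * x0 powr (-2)" using True assms Cb_pos[of x0]
        by (intro mult_left_mono powr_mono2') auto
      finally show ?thesis using True by (auto intro!: ennreal_leI)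
    qed auto
  qed
  also have "\<dots> = ennreal (Cb \<nu> m x0 * x0 powr (-2) * (y - x))"
    using assms Cb_pos[of x0] by (subst nn_integral_cmult_indicator) (auto simp: ennreal_mult[symmetric])
  finally show ?thesis .
qed

lemma J_lower_gen:
  assumes "x \<le> y" "\<And>u. x < u \<Longrightarrow> u \<le> y \<Longrightarrow> c \<le> gfun \<nu> m u" "0 \<le> c"
  shows "ennreal (c * (y - x)) \<le> J x y"
proof -
  have "ennreal (c * (y - x)) = (\<integral>\<^sup>+ u. ennreal c * indicator {x<..y} u \<partial>lborel)"
    using assms by (subst nn_integral_cmult_indicator) (auto simp: ennreal_mult')
  also have "\<dots> \<le> J x y" unfolding J_def
    using assms by (intro nn_integral_mono) (auto simp: indicator_def intro!: ennreal_leI)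
  finally show ?thesis .
qed

lemma J_pos:
  assumes "0 < x" "x < y" shows "0 < J x y"
proof -
  define c where "c = min (x powr (\<nu>-2)) (y powr (\<nu>-2)) * exp (-(m*y) * cosh 1)"
  have c0: "0 < c" using assms by (simp add: c_def)
  have "c \<le> gfun \<nu> m u" if u: "x < u" "u \<le> y" for u
  proof -
    have "min (x powr (\<nu>-2)) (y powr (\<nu>-2)) \<le> u powr (\<nu>-2)"
    proof (cases "\<nu> - 2 \<ge> 0")
      case True thus ?thesis using u assms by (intro min.coboundedI1 powr_mono2) auto
    next
      case False thus ?thesis using u assms by (intro min.coboundedI2 powr_mono2') auto
    qed
    moreover have "exp (-(m*y) * cosh 1) \<le> besselK \<nu> (m*u)"
    proof -
      have "exp (-(m*y) * cosh 1) \<le> exp (-(m*u) * cosh 1)"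
        using u m cosh_real_ge_1[of 1] by (simp add: mult_right_mono)
      also have "\<dots> \<le> besselK \<nu> (m*u)" using u assms m nu by (intro besselK_pos) auto
      finally show ?thesis .
    qed
    ultimately show ?thesis unfolding c_def gfun_def using assms
      by (intro mult_mono) auto
  qed
  from J_lower_gen[of x y c, OF _ this] c0 assms
  have "ennreal (c * (y - x)) \<le> J x y" by auto
  moreover have "0 < ennreal (c * (y - x))" using c0 assms by simp
  ultimately show ?thesis by order
qed

lemma Ie_lower:
  assumes "0 < x" "x \<le> exp (-1) / (2*m)"
  shows "ennreal (exp (-1-\<nu>)/2 * m powr (-\<nu>) / (4*x)) \<le> Ie \<nu> m x"
proof -
  define c where "c = exp (-1-\<nu>)/2 * m powr (-\<nu>) * (2*x) powr (-2)"
  have "c \<le> gfun \<nu> m u" if u: "x < u" "u \<le> 2*x" for u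
  proof -
    have u0: "0 < u" using u assms by simp
    have "m*u \<le> m*(2*x)" using u m by (intro mult_left_mono) auto
    also have "\<dots> \<le> exp (-1)" using assms m by (simp add: field_simps)
    finally have "m*u \<le> exp (-1)" .
    hence K: "exp (-1-\<nu>)/2 * (m*u) powr (-\<nu>) \<le> besselK \<nu> (m*u)"
      using u0 m nu by (intro besselK_lower_small) auto
    have "c \<le> exp (-1-\<nu>)/2 * m powr (-\<nu>) * u powr (-2)"
      unfolding c_def using u u0 by (intro mult_left_mono powr_mono2') auto
    also have "\<dots> = u powr (\<nu>-2) * (exp (-1-\<nu>)/2 * (m*u) powr (-\<nu>))"
      using u0 m by (simp add: powr_mult powr_add[symmetric] algebra_simps)
    also have "\<dots> \<le> gfun \<nu> m u" unfolding gfun_def using K by (intro mult_left_mono) auto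
    finally show ?thesis .
  qed
  from J_lower_gen[of x "2*x" c, OF _ this] assms
  have "ennreal (c * (2*x - x)) \<le> J x (2*x)" by (auto simp: c_def)
  also have "\<dots> \<le> Ie \<nu> m x" using Ie_split[of x "2*x"] assms by simp
  finally have 1: "ennreal (c * (2 * x - x)) \<le> Ie \<nu> m x" .
  have "(2*x) powr (-2) = inverse ((2*x) powr 2)" using assms by (simp add: powr_minus)
  also have "(2*x) powr 2 = (2*x)^2" using assms by (simp add: powr_numeral)
  also have "inverse ((2*x)^2) = 1/(4*x^2)" by (simp add: power2_eq_square inverse_eq_divide)
  finally have e: "(2*x) powr (-2) = 1/(4*x^2)" .
  have "c * (2 * x - x) = exp (-1-\<nu>)/2 * m powr (-\<nu>) * (1/(4*x^2)) * (2 * x - x)"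
    unfolding c_def e ..
  also have "\<dots> = exp (-1-\<nu>)/2 * m powr (-\<nu>) / (4*x)"
    using assms by (simp add: power2_eq_square)
  finally have "c * (2 * x - x) = exp (-1-\<nu>)/2 * m powr (-\<nu>) / (4*x)" .
  thus ?thesis using 1 by simp
qed

lemma J_finite: assumes "x \<le> y" "0 < x" shows "J x y < \<infinity>"
proof -
  have "J x y \<le> Ie \<nu> m x" using Ie_split[OF assms(1)] by simp
  also have "\<dots> < \<infinity>" by (rule Ie_finite[OF assms(2)])
  finally show ?thesis .
qed

lemma Ireal_diff:
  assumes "0 < x" "x \<le> y"
  shows "Ireal \<nu> m x = enn2real (J x y) + Ireal \<nu> m y"
proof -
  have y: "0 < y" using assms by simp
  have "ennreal (Ireal \<nu> m x) = J x y + ennreal (Ireal \<nu> m y)"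
    using Ie_split[OF assms(2)] ennreal_Ireal[OF assms(1)] ennreal_Ireal[OF y] by simp
  also have "J x y = ennreal (enn2real (J x y))" using J_finite[OF assms(2,1)] by (simp add: less_top)
  finally have "ennreal (Ireal \<nu> m x) = ennreal (enn2real (J x y) + Ireal \<nu> m y)"
    by (simp add: ennreal_plus Ireal_eq)
  thus ?thesis by (subst (asm) ennreal_inj) (auto simp: Ireal_eq)
qed

lemma Ireal_strict:
  assumes "0 < x" "x < y" shows "Ireal \<nu> m y < Ireal \<nu> m x"
proof -
  have "0 < enn2real (J x y)" using J_pos[OF assms] J_finite[of x y] assms
    by (simp add: enn2real_positive_iff)
  thus ?thesis using Ireal_diff[of x y] assms by simp
qed

lemma Ireal_pos:
  assumes "0 < x" shows "0 < Ireal \<nu> m x"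
proof -
  have "0 \<le> Ireal \<nu> m (x+1)" by (simp add: Ireal_eq)
  also have "\<dots> < Ireal \<nu> m x" using assms by (intro Ireal_strict) auto
  finally show ?thesis .
qed

lemma Ireal_lip:
  assumes "0 < x0" "x0 \<le> x" "x \<le> y"
  shows "Ireal \<nu> m x - Ireal \<nu> m y \<le> Cb \<nu> m x0 * x0 powr (-2) * (y - x)"
proof -
  have "enn2real (J x y) \<le> enn2real (ennreal (Cb \<nu> m x0 * x0 powr (-2) * (y - x)))"
    using J_upper[OF assms] by (intro enn2real_mono) auto
  also have "\<dots> = Cb \<nu> m x0 * x0 powr (-2) * (y - x)" using assms Cb_pos[of x0] by simp
  finally show ?thesis using Ireal_diff[of x y] assms by simp
qed

lemma Ireal_cont: "continuous_on {0<..} (Ireal \<nu> m)"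
proof (subst continuous_on_eq_continuous_at, simp, intro ballI)
  fix p :: real assume "p \<in> {0<..}"
  hence p: "0 < p" by simp
  define L where "L = Cb \<nu> m (p/2) * (p/2) powr (-2)"
  have L: "0 \<le> L" unfolding L_def using Cb_pos[of "p/2"] by simp
  have "L-lipschitz_on {p/2<..} (Ireal \<nu> m)"
  proof (rule lipschitz_onI[OF _ L])
    fix x y assume xy: "x \<in> {p/2<..}" "y \<in> {p/2<..}"
    show "dist (Ireal \<nu> m x) (Ireal \<nu> m y) \<le> L * dist x y"
    proof (cases "x \<le> y")
      case True
      have "0 \<le> Ireal \<nu> m x - Ireal \<nu> m y"
        using Ireal_diff[of x y] True xy p by (simp add: Ireal_eq)
      moreover have "Ireal \<nu> m x - Ireal \<nu> m y \<le> L * (y - x)"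
        unfolding L_def using Ireal_lip[of "p/2" x y] xy True p by simp
      ultimately show ?thesis using True by (simp add: dist_real_def)
    next
      case False
      have "0 \<le> Ireal \<nu> m y - Ireal \<nu> m x"
        using Ireal_diff[of y x] False xy p by (simp add: Ireal_eq)
      moreover have "Ireal \<nu> m y - Ireal \<nu> m x \<le> L * (x - y)"
        unfolding L_def using Ireal_lip[of "p/2" y x] xy False p by simp
      ultimately show ?thesis using False by (simp add: dist_real_def)
    qed
  qed
  hence "continuous_on {p/2<..} (Ireal \<nu> m)" by (rule lipschitz_on_continuous_on)
  thus "isCont (Ireal \<nu> m) p" using p
    by (subst (asm) continuous_on_eq_continuous_at) auto
qed

lemma Ireal_top: "(Ireal \<nu> m \<longlongrightarrow> 0) at_top"
proof (rule tendsto_sandwich)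
  show "\<forall>\<^sub>F x in at_top. 0 \<le> Ireal \<nu> m x" by (simp add: Ireal_eq)
  show "\<forall>\<^sub>F x in at_top. Ireal \<nu> m x \<le> Cb \<nu> m 1 / x"
    using eventually_ge_at_top[of "1::real"]
  proof eventually_elim
    case (elim x)
    have "Ireal \<nu> m x = enn2real (Ie \<nu> m x)" by (rule Ireal_eq)
    also have "\<dots> \<le> enn2real (ennreal (Cb \<nu> m x / x))"
      using Ie_upper[of x] elim by (intro enn2real_mono) auto
    also have "\<dots> = Cb \<nu> m x / x" using elim Cb_pos[of x] by simp
    also have "\<dots> \<le> Cb \<nu> m 1 / x"
    proof -
      have "2*(\<nu>+1)^2/(m*x) \<le> 2*(\<nu>+1)^2/(m*1)" using elim m
        by (intro divide_left_mono mult_left_mono) auto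
      hence "Cb \<nu> m x \<le> Cb \<nu> m 1" unfolding Cb_def by (intro mult_right_mono) auto
      thus ?thesis using elim by (intro divide_right_mono) auto
    qed
    finally show ?case .
  qed
  show "((\<lambda>x. Cb \<nu> m 1 / x) \<longlongrightarrow> 0) at_top" by real_asymp
qed simp

lemma Ireal_bot: "filterlim (Ireal \<nu> m) at_top (at_right 0)"
proof (rule filterlim_at_top_mono)
  define k where "k = exp (-1-\<nu>)/2 * m powr (-\<nu>) / 4"
  have k: "0 < k" unfolding k_def using m by simp
  show "filterlim (\<lambda>x. k / x) at_top (at_right 0)" using k by real_asymp
  have "\<forall>\<^sub>F x in at_right 0. 0 < x \<and> x \<le> exp (-1) / (2*m)"
    using m by (intro eventually_conj eventually_at_right_less) (auto simp: eventually_at_right_field intro!: exI[of _ "exp (-1) / (2*m)"])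
  thus "\<forall>\<^sub>F x in at_right 0. k / x \<le> Ireal \<nu> m x"
  proof eventually_elim
    case (elim x)
    have "ennreal (k / x) \<le> Ie \<nu> m x" using Ie_lower[of x] elim unfolding k_def
      by (simp add: field_simps)
    also have "\<dots> = ennreal (Ireal \<nu> m x)" using ennreal_Ireal elim by simp
    finally show ?case using Ireal_pos[of x] elim by (subst (asm) ennreal_le_iff) auto
  qed
qed

end



context
  fixes \<nu> m A :: real
  assumes nu: "1 \<le> \<nu>" and m: "0 < m" and A: "0 < A"
begin

definition lf :: "real \<Rightarrow> real" where
  "lf x = A / (m powr \<nu> * Ireal \<nu> m x)"

lemma lf_pos: "0 < x \<Longrightarrow> 0 < lf x"
  unfolding lf_def using A m Ireal_pos[OF nu m] by simp

lemma lf_strict: assumes "0 < x" "x < y" shows "lf x < lf y"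
proof -
  have "Ireal \<nu> m y < Ireal \<nu> m x" by (rule Ireal_strict[OF nu m assms])
  moreover have "0 < Ireal \<nu> m y" using assms by (intro Ireal_pos[OF nu m]) auto
  ultimately show ?thesis unfolding lf_def using A m
    by (intro divide_strict_left_mono mult_strict_left_mono) auto
qed

lemma lf_cont: "continuous_on {0<..} lf"
  unfolding lf_def
proof (rule continuous_on_divide[OF continuous_on_const continuous_on_mult[OF continuous_on_const Ireal_cont[OF nu m]]])
  show "\<forall>x\<in>{0<..}. m powr \<nu> * Ireal \<nu> m x \<noteq> 0"
  proof
    fix x :: real assume "x \<in> {0<..}"
    thus "m powr \<nu> * Ireal \<nu> m x \<noteq> 0" using Ireal_pos[OF nu m, of x] m by simp
  qed
qed

lemma lf_big: assumes "0 < v" shows "\<exists>x>0. v < lf x"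
proof -
  have "0 < A / (m powr \<nu> * v)" using A m assms by simp
  hence "\<forall>\<^sub>F x in at_top. Ireal \<nu> m x < A / (m powr \<nu> * v)"
    by (rule order_tendstoD(2)[OF Ireal_top[OF nu m]])
  then obtain N where N: "\<And>x. x \<ge> N \<Longrightarrow> Ireal \<nu> m x < A / (m powr \<nu> * v)"
    by (auto simp: eventually_at_top_linorder)
  define x where "x = max N 1"
  have x: "0 < x" "Ireal \<nu> m x < A / (m powr \<nu> * v)" using N[of x] by (auto simp: x_def)
  have I: "0 < Ireal \<nu> m x" using x Ireal_pos[OF nu m] by simp
  have mp: "0 < m powr \<nu> * v" "0 < m powr \<nu> * Ireal \<nu> m x" using m assms I by auto
  have "Ireal \<nu> m x * (m powr \<nu> * v) < A" using x(2) mp by (simp add: pos_less_divide_eq)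
  hence "v * (m powr \<nu> * Ireal \<nu> m x) < A" by (simp add: algebra_simps)
  hence "v < lf x" unfolding lf_def using mp by (simp add: pos_less_divide_eq)
  thus ?thesis using x by blast
qed

lemma lf_small: assumes "0 < v" shows "\<exists>x>0. lf x < v"
proof -
  have "\<forall>\<^sub>F x in at_right 0. A / (m powr \<nu> * v) < Ireal \<nu> m x"
    using Ireal_bot[OF nu m] by (simp add: filterlim_at_top_dense)
  then obtain b where b: "0 < b" "\<And>y. 0 < y \<Longrightarrow> y < b \<Longrightarrow> A / (m powr \<nu> * v) < Ireal \<nu> m y"
    by (auto simp: eventually_at_right_field)
  define x where "x = b/2"
  have x: "0 < x" "A / (m powr \<nu> * v) < Ireal \<nu> m x" using b by (auto simp: x_def)
  have I: "0 < Ireal \<nu> m x" using x Ireal_pos[OF nu m] by simp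
  have mp: "0 < m powr \<nu> * v" "0 < m powr \<nu> * Ireal \<nu> m x" using m assms I by auto
  have "A < Ireal \<nu> m x * (m powr \<nu> * v)" using x(2) mp by (simp add: pos_divide_less_eq)
  hence "A < v * (m powr \<nu> * Ireal \<nu> m x)" by (simp add: algebra_simps)
  hence "lf x < v" unfolding lf_def using mp by (simp add: pos_divide_less_eq)
  thus ?thesis using x by blast
qed

lemma lf_bij: "bij_betw lf {0<..} {0<..}"
proof (rule bij_betw_imageI)
  show "inj_on lf {0<..}"
    by (rule strict_mono_on_imp_inj_on) (auto simp: strict_mono_on_def intro: lf_strict)
  show "lf ` {0<..} = {0<..}"
  proof
    show "lf ` {0<..} \<subseteq> {0<..}" using lf_pos by auto
    show "{0<..} \<subseteq> lf ` {0<..}"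
    proof
      fix v :: real assume "v \<in> {0<..}"
      hence v: "0 < v" by simp
      obtain x1 where x1: "0 < x1" "lf x1 < v" using lf_small[OF v] by blast
      obtain x2 where x2: "0 < x2" "v < lf x2" using lf_big[OF v] by blast
      have "x1 < x2"
      proof (rule ccontr)
        assume "\<not> x1 < x2"
        hence "x2 \<le> x1" by simp
        hence "lf x2 \<le> lf x1" using lf_strict[of x2 x1] x2 by (cases "x2 = x1") auto
        thus False using x1 x2 by simp
      qed
      have "continuous_on {x1..x2} lf" by (rule continuous_on_subset[OF lf_cont]) (use x1 in auto)
      then obtain x where "x1 \<le> x" "x \<le> x2" "lf x = v"
        using IVT'[of lf x1 v x2] x1 x2 \<open>x1 < x2\<close> by auto
      thus "v \<in> lf ` {0<..}" using x1 by force
    qed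
  qed
qed

definition H :: "real \<Rightarrow> real" where
  "H r = (if 0 < r then inv_into {0<..} lf r else 0)"

lemma H_prop: assumes "0 < r" shows "0 < H r" "lf (H r) = r"
proof -
  have r: "r \<in> lf ` {0<..}" using lf_bij assms by (simp add: bij_betw_def)
  show "0 < H r" using inv_into_into[OF r] assms by (simp add: H_def)
  show "lf (H r) = r" using f_inv_into_f[OF r] assms by (simp add: H_def)
qed

lemma H_lf: assumes "0 < x" shows "H (lf x) = x"
  using lf_pos[OF assms] inv_into_f_f[of lf "{0<..}" x] lf_bij assms
  by (simp add: H_def bij_betw_def)

lemma lf_less_iff: assumes "0 < x" "0 < y" shows "lf x < lf y \<longleftrightarrow> x < y"
proof
  assume "lf x < lf y"
  show "x < y"
  proof (rule ccontr)
    assume "\<not> x < y"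
    hence "y < x \<or> y = x" by auto
    thus False using lf_strict[of y x] assms \<open>lf x < lf y\<close> by auto
  qed
qed (use lf_strict assms in auto)

lemma H_gt_iff: assumes "0 < r" "0 < x" shows "x < H r \<longleftrightarrow> lf x < r"
  using lf_less_iff[of x "H r"] H_prop[OF assms(1)] assms by simp

lemma H_mono: "mono H"
proof
  fix r s :: real assume "r \<le> s"
  show "H r \<le> H s"
  proof (cases "0 < r")
    case True
    hence "0 < s" using \<open>r \<le> s\<close> by simp
    have "\<not> H s < H r"
    proof
      assume "H s < H r"
      hence "lf (H s) < lf (H r)" using H_prop True \<open>0 < s\<close> by (intro lf_strict) auto
      thus False using H_prop True \<open>0 < s\<close> \<open>r \<le> s\<close> by simp
    qed
    thus ?thesis by simp
  next
    case False
    thus ?thesis using H_prop[of s] by (cases "0 < s") (auto simp: H_def)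
  qed
qed

end



lemma measure_eqI_atMost:
  fixes M N :: "real measure"
  assumes sets: "sets M = sets borel" "sets N = sets borel"
  assumes fin: "\<And>x. emeasure M {..x} < \<infinity>"
  assumes "\<And>x. emeasure M {..x} = emeasure N {..x}"
  shows "M = N"
proof (rule measure_eqI_generator_eq_countable)
  let ?LT = "\<lambda>a::real. {..a}" let ?E = "range ?LT"
  show "Int_stable ?E"
    by (auto simp: Int_stable_def)
  show "?E \<subseteq> Pow UNIV" "sets M = sigma_sets UNIV ?E" "sets N = sigma_sets UNIV ?E"
    unfolding sets borel_eq_atMost by auto
  show "?LT`Rats \<subseteq> ?E" "(\<Union>i\<in>Rats. ?LT i) = UNIV" "\<And>a. a \<in> ?LT`Rats \<Longrightarrow> emeasure M a \<noteq> \<infinity>"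
    using fin by (auto intro: Rats_no_top_le simp: less_top)
qed (auto intro: assms countable_rat)

definition rhom :: "nat \<Rightarrow> real measure" where
  "rhom d = density lborel (\<lambda>r. ennreal (if 0 < r then real d * r^(d-1) else 0))"

lemma sets_rhom[simp, measurable_cong]: "sets (rhom d) = sets borel"
  by (simp add: rhom_def)

lemma rhom_atMost:
  assumes "1 \<le> d"
  shows "emeasure (rhom d) {..b} = ennreal (if 0 < b then b^d else 0)"
proof (cases "0 < b")
  case True
  have "((\<lambda>r. real d * r^(d-1)) has_integral (b^d - 0^d)) {0..b}"
    using True
    by (intro fundamental_theorem_of_calculus)
       (auto intro!: derivative_eq_intros simp flip: has_real_derivative_iff_has_vector_derivative)
  moreover have "(0::real)^d = 0" using assms by (simp add: power_0_left)
  ultimately have "((\<lambda>r. real d * r^(d-1)) has_integral b^d) {0<..b}"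
    using assms
    by (subst has_integral_spike_set_eq[where T="{0..b}"]) (auto intro: negligible_subset[of "{0}"])
  from nn_integral_has_integral_lebesgue[OF _ this]
  have "(\<integral>\<^sup>+ r. ennreal (indicator {0<..b} r * (real d * r^(d-1))) \<partial>lborel) = ennreal (b^d)"
    using True by simp
  moreover have "emeasure (rhom d) {..b} = (\<integral>\<^sup>+ r. ennreal (indicator {0<..b} r * (real d * r^(d-1))) \<partial>lborel)"
    unfolding rhom_def by (subst emeasure_density) (auto intro!: nn_integral_cong simp: indicator_def)
  ultimately show ?thesis using True by simp
next
  case False
  have z: "(\<lambda>r. ennreal (if 0 < r then real d * r^(d-1) else 0) * indicator {..b} r) = (\<lambda>_. 0)"
    using False by (auto simp: fun_eq_iff indicator_def)
  have "emeasure (rhom d) {..b} = 0"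
    unfolding rhom_def by (subst emeasure_density) (auto simp: z)
  thus ?thesis using False by simp
qed

lemma sigma_finite_rhom: assumes "1 \<le> d" shows "sigma_finite_measure (rhom d)"
proof
  show "\<exists>A. countable A \<and> A \<subseteq> sets (rhom d) \<and> \<Union> A = space (rhom d) \<and> (\<forall>a\<in>A. emeasure (rhom d) a \<noteq> \<infinity>)"
  proof (intro exI[of _ "range (\<lambda>n::nat. {..real n})"] conjI)
    show "\<Union> (range (\<lambda>n::nat. {..real n})) = space (rhom d)"
      by (auto simp: rhom_def intro: real_arch_simple)
  qed (auto simp: rhom_atMost[OF assms])
qed


definition sigm :: "'a::euclidean_space measure" where
  "sigm = distr (density lborel (indicator (cball 0 1))) borel sgn"

lemma sets_sigm[simp, measurable_cong]: "sets sigm = sets borel"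
  by (simp add: sigm_def)

lemma space_sigm[simp]: "space sigm = UNIV" by (simp add: sigm_def)

lemma emeasure_sigm:
  assumes [measurable]: "A \<in> sets borel"
  shows "emeasure (sigm :: 'a::euclidean_space measure) A = emeasure lborel {z::'a. norm z \<le> 1 \<and> sgn z \<in> A}"
proof -
  have "emeasure (sigm :: 'a measure) A = emeasure (density lborel (indicator (cball (0::'a) 1))) (sgn -` A)"
    unfolding sigm_def by (subst emeasure_distr) auto
  also have "\<dots> = emeasure lborel (cball 0 1 \<inter> sgn -` A)"
    by (rule emeasure_restricted) (use measurable_sets[OF borel_measurable_sgn assms] in auto)
  also have "cball (0::'a) 1 \<inter> sgn -` A = {z. norm z \<le> 1 \<and> sgn z \<in> A}" by auto
  finally show ?thesis .
qed

lemma finite_sigm: "finite_measure (sigm :: 'a::euclidean_space measure)"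
proof (rule finite_measureI)
  have "emeasure (sigm :: 'a measure) (space sigm) = emeasure lborel {z::'a. norm z \<le> 1 \<and> sgn z \<in> UNIV}"
    by (subst emeasure_sigm) auto
  also have "{z::'a. norm z \<le> 1 \<and> sgn z \<in> UNIV} = cball 0 1" by auto
  finally show "emeasure (sigm :: 'a measure) (space sigm) \<noteq> \<infinity>"
    using emeasure_lborel_cball_finite[of "0::'a" 1] by simp
qed

lemma lborel_scale_cone:
  fixes A :: "'a::euclidean_space set"
  assumes [measurable]: "A \<in> sets borel" and b: "0 < b"
  shows "emeasure lborel {z::'a. norm z \<le> b \<and> sgn z \<in> A} = ennreal (b^DIM('a)) * emeasure lborel {z::'a. norm z \<le> 1 \<and> sgn z \<in> A}"
proof -
  let ?X = "{z::'a. norm z \<le> b \<and> sgn z \<in> A}"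
  have X[measurable]: "?X \<in> sets borel" by measurable
  have "emeasure lborel ?X = emeasure (density (distr lborel borel (\<lambda>x::'a. 0 + b *\<^sub>R x)) (\<lambda>_. ennreal (\<bar>b\<bar>^DIM('a)))) ?X"
    using lborel_affine[of b "0::'a"] b by simp
  also have "\<dots> = ennreal (b^DIM('a)) * emeasure (distr lborel borel (\<lambda>x::'a. 0 + b *\<^sub>R x)) ?X"
    using b by (subst emeasure_density) (auto simp: nn_integral_cmult_indicator)
  also have "emeasure (distr lborel borel (\<lambda>x::'a. 0 + b *\<^sub>R x)) ?X = emeasure lborel ((\<lambda>x::'a. 0 + b *\<^sub>R x) -` ?X)"
    by (subst emeasure_distr) auto
  also have "(\<lambda>x::'a. 0 + b *\<^sub>R x) -` ?X = {z::'a. norm z \<le> 1 \<and> sgn z \<in> A}"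
    using b by (auto simp: sgn_scaleR)
  finally show ?thesis .
qed


lemma cone_atMost:
  fixes A :: "'a::euclidean_space set"
  assumes [measurable]: "A \<in> sets borel"
  shows "emeasure lborel {z::'a. norm z \<le> b \<and> sgn z \<in> A} = emeasure (rhom DIM('a)) {..b} * emeasure sigm A"
proof (cases "0 < b")
  case True
  show ?thesis using lborel_scale_cone[OF assms True] True
    by (simp add: rhom_atMost emeasure_sigm)
next
  case False
  have sub: "{z::'a. norm z \<le> b \<and> sgn z \<in> A} \<subseteq> {0}"
  proof
    fix x assume x: "x \<in> {z::'a. norm z \<le> b \<and> sgn z \<in> A}"
    hence "norm x \<le> b" by simp
    hence "norm x \<le> 0" using False by linarith
    thus "x \<in> {0}" by simp
  qed
  have "emeasure lborel {z::'a. norm z \<le> b \<and> sgn z \<in> A} \<le> emeasure lborel {0::'a}"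
    by (rule emeasure_mono[OF sub]) simp
  hence "emeasure lborel {z::'a. norm z \<le> b \<and> sgn z \<in> A} = 0" by simp
  thus ?thesis using False by (simp add: rhom_atMost)
qed

lemma cone_rect:
  fixes A :: "'a::euclidean_space set"
  assumes [measurable]: "A \<in> sets borel" and [measurable]: "I \<in> sets borel"
  shows "emeasure lborel {z::'a. norm z \<in> I \<and> sgn z \<in> A} = emeasure (rhom DIM('a)) I * emeasure sigm A"
proof -
  define MA :: "real measure" where "MA = distr (density lborel (indicator (sgn -` A :: 'a set))) borel norm"
  define RA :: "real measure" where "RA = density (rhom DIM('a)) (\<lambda>_. emeasure sigm A)"
  have SA[measurable]: "(sgn -` A :: 'a set) \<in> sets borel"
    using measurable_sets[OF borel_measurable_sgn assms(1)] by simp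
  have MA: "emeasure MA J = emeasure lborel {z::'a. norm z \<in> J \<and> sgn z \<in> A}" if [measurable]: "J \<in> sets borel" for J
  proof -
    have "emeasure MA J = emeasure (density lborel (indicator (sgn -` A :: 'a set))) (norm -` J)"
      unfolding MA_def by (subst emeasure_distr) auto
    also have "\<dots> = emeasure lborel ((sgn -` A) \<inter> norm -` J)"
      by (rule emeasure_restricted) (use measurable_sets[OF borel_measurable_norm that] in auto)
    also have "(sgn -` A) \<inter> norm -` J = {z::'a. norm z \<in> J \<and> sgn z \<in> A}" by auto
    finally show ?thesis .
  qed
  have RA: "emeasure RA J = emeasure (rhom DIM('a)) J * emeasure sigm A" if [measurable]: "J \<in> sets borel" for J
  proof -
    have "emeasure RA J = (\<integral>\<^sup>+ x. emeasure sigm A * indicator J x \<partial>rhom DIM('a))"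
      unfolding RA_def by (subst emeasure_density) (auto simp: mult.commute)
    also have "\<dots> = emeasure sigm A * emeasure (rhom DIM('a)) J"
      by (rule nn_integral_cmult_indicator) simp
    finally show ?thesis by (simp add: mult.commute)
  qed
  have fs: "emeasure sigm A < \<infinity>"
    using finite_measure.emeasure_finite[OF finite_sigm, of A] by (simp add: less_top)
  have "MA = RA"
  proof (rule measure_eqI_atMost)
    show "sets MA = sets borel" "sets RA = sets borel" by (auto simp: MA_def RA_def)
    fix x :: real
    have e: "emeasure MA {..x} = emeasure (rhom DIM('a)) {..x} * emeasure sigm A"
      using cone_atMost[OF assms(1), of x] by (simp add: MA)
    show "emeasure MA {..x} < \<infinity>" unfolding e using fs
      by (simp add: rhom_atMost ennreal_mult_less_top)
    show "emeasure MA {..x} = emeasure RA {..x}" unfolding e by (simp add: RA)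
  qed
  thus ?thesis using MA[OF assms(2)] RA[OF assms(2)] by simp
qed

lemma polar_measure:
  "distr lborel (rhom DIM('a) \<Otimes>\<^sub>M sigm) (\<lambda>z::'a::euclidean_space. (norm z, sgn z)) = rhom DIM('a) \<Otimes>\<^sub>M (sigm :: 'a measure)"
proof (rule pair_measure_eqI[symmetric])
  show "sigma_finite_measure (rhom DIM('a))" by (rule sigma_finite_rhom) (simp add: DIM_positive Suc_le_eq)
  interpret finite_measure "sigm :: 'a measure" by (rule finite_sigm)
  show "sigma_finite_measure (sigm :: 'a measure)" ..
  show "sets (rhom DIM('a) \<Otimes>\<^sub>M sigm) = sets (distr lborel (rhom DIM('a) \<Otimes>\<^sub>M sigm) (\<lambda>z::'a. (norm z, sgn z)))"
    by simp
  fix I :: "real set" and A :: "'a set" assume IA: "I \<in> sets (rhom DIM('a))" "A \<in> sets sigm"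
  have [measurable]: "I \<in> sets borel" "A \<in> sets borel" using IA by simp_all
  have "I \<times> A \<in> sets (rhom DIM('a) \<Otimes>\<^sub>M (sigm :: 'a measure))" using IA by (rule pair_measureI)
  have "emeasure (distr lborel (rhom DIM('a) \<Otimes>\<^sub>M sigm) (\<lambda>z::'a. (norm z, sgn z))) (I \<times> A)
      = emeasure lborel ((\<lambda>z::'a. (norm z, sgn z)) -` (I \<times> A))"
    using \<open>I \<times> A \<in> sets (rhom DIM('a) \<Otimes>\<^sub>M (sigm :: 'a measure))\<close> by (subst emeasure_distr) auto
  also have "(\<lambda>z::'a. (norm z, sgn z)) -` (I \<times> A) = {z. norm z \<in> I \<and> sgn z \<in> A}" by auto
  also have "emeasure lborel \<dots> = emeasure (rhom DIM('a)) I * emeasure sigm A"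
    by (rule cone_rect) auto
  finally show "emeasure (rhom DIM('a)) I * emeasure sigm A =
      emeasure (distr lborel (rhom DIM('a) \<Otimes>\<^sub>M sigm) (\<lambda>z::'a. (norm z, sgn z))) (I \<times> A)" ..
qed

lemma polar_nn_integral:
  fixes F :: "real \<times> 'a::euclidean_space \<Rightarrow> ennreal"
  assumes F[measurable]: "F \<in> borel_measurable (borel \<Otimes>\<^sub>M borel)"
  shows "(\<integral>\<^sup>+ z. F (norm z, sgn z) \<partial>(lborel :: 'a measure)) = (\<integral>\<^sup>+ u. (\<integral>\<^sup>+ r. F (r, u) \<partial>rhom DIM('a)) \<partial>sigm)"
proof -
  have Fm[measurable]: "F \<in> borel_measurable (rhom DIM('a) \<Otimes>\<^sub>M (sigm :: 'a measure))"
    using F by (simp cong: measurable_cong_sets)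
  have "(\<integral>\<^sup>+ z. F (norm z, sgn z) \<partial>(lborel :: 'a measure))
      = (\<integral>\<^sup>+ p. F p \<partial>distr lborel (rhom DIM('a) \<Otimes>\<^sub>M (sigm :: 'a measure)) (\<lambda>z::'a. (norm z, sgn z)))"
    by (subst nn_integral_distr) auto
  also have "\<dots> = (\<integral>\<^sup>+ p. F p \<partial>(rhom DIM('a) \<Otimes>\<^sub>M (sigm :: 'a measure)))"
    by (simp only: polar_measure)
  also have "\<dots> = (\<integral>\<^sup>+ u. (\<integral>\<^sup>+ r. F (r, u) \<partial>rhom DIM('a)) \<partial>sigm)"
  proof -
    interpret R: sigma_finite_measure "rhom DIM('a)" by (rule sigma_finite_rhom) (simp add: DIM_positive Suc_le_eq)
    interpret S: finite_measure "sigm :: 'a measure" by (rule finite_sigm)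
    interpret pair_sigma_finite "rhom DIM('a)" "sigm :: 'a measure" ..
    show ?thesis by (rule nn_integral_snd[symmetric]) (rule Fm)
  qed
  finally show ?thesis .
qed



definition Egen :: "real set set" where
  "Egen = {{x<..} | x. 0 < x} \<union> {S. S \<in> sets borel \<and> S \<subseteq> {..0}}"

lemma Egen_sigma: "sets borel = sigma_sets UNIV Egen"
proof
  show "sigma_sets UNIV Egen \<subseteq> sets borel"
    by (rule sets.sigma_sets_subset[of _ borel, simplified]) (auto simp: Egen_def)
next
  interpret S: sigma_algebra UNIV "sigma_sets UNIV Egen" by (rule sigma_algebra_sigma_sets) simp
  have pos: "{0<..} \<in> sigma_sets UNIV Egen"
  proof -
    have "{0<..} = (\<Union>n. {inverse (real (Suc n))<..})"
    proof (intro equalityI subsetI)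
      fix x :: real assume "x \<in> {0<..}"
      then obtain n where "n > 0" "inverse (real n) < x" using ex_inverse_of_nat_less[of x] by auto
      thus "x \<in> (\<Union>n. {inverse (real (Suc n))<..})"
        by (intro UN_I[of "n - 1"]) auto
    next
      fix x :: real assume "x \<in> (\<Union>n. {inverse (real (Suc n))<..})"
      then obtain n where n: "inverse (real (Suc n)) < x" by auto
      have p: "0 < inverse (real (Suc n))" by simp
      show "x \<in> {0<..}" using order.strict_trans[OF p n] by simp
    qed
    also have "\<dots> \<in> sigma_sets UNIV Egen"
      by (intro S.countable_UN') (auto simp: Egen_def intro!: sigma_sets.Basic)
    finally show ?thesis .
  qed
  have "{..b} \<in> sigma_sets UNIV Egen" for b :: real
  proof (cases "0 < b")
    case False
    thus ?thesis by (intro sigma_sets.Basic) (auto simp: Egen_def)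
  next
    case True
    have "{..b} = {..0} \<union> ({0<..} - {b<..})" using True by auto
    also have "\<dots> \<in> sigma_sets UNIV Egen"
      using True pos by (intro S.Un S.Diff) (auto simp: Egen_def intro!: sigma_sets.Basic)
    finally show ?thesis .
  qed
  hence "sigma_sets UNIV (range (\<lambda>b::real. {..b})) \<subseteq> sigma_sets UNIV Egen"
    by (intro S.sigma_sets_subset) auto
  thus "sets borel \<subseteq> sigma_sets UNIV Egen"
    by (simp add: borel_eq_atMost sets_measure_of)
qed

lemma EgenI1: "0 < x \<Longrightarrow> {x<..} \<in> Egen" unfolding Egen_def by blast
lemma EgenI2: "S \<in> sets borel \<Longrightarrow> S \<subseteq> {..0} \<Longrightarrow> S \<in> Egen" unfolding Egen_def by blast
lemma EgenE: assumes "S \<in> Egen" obtains x where "0 < x" "S = {x<..}" | "S \<in> sets borel" "S \<subseteq> {..0}"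
  using assms unfolding Egen_def by blast

lemma real_measure_eqI_Egen:
  fixes M N :: "real measure"
  assumes sets: "sets M = sets borel" "sets N = sets borel"
  assumes zero: "\<And>S. S \<in> sets borel \<Longrightarrow> S \<subseteq> {..0} \<Longrightarrow> emeasure M S = 0 \<and> emeasure N S = 0"
  assumes fin: "\<And>x. 0 < x \<Longrightarrow> emeasure M {x<..} < \<infinity>"
  assumes eq: "\<And>x. 0 < x \<Longrightarrow> emeasure M {x<..} = emeasure N {x<..}"
  shows "M = N"
proof (rule measure_eqI_generator_eq[where E=Egen and \<Omega>=UNIV and A="\<lambda>i. if i = 0 then {..0} else {inverse (real i)<..}"])
  show "Int_stable Egen"
    unfolding Int_stable_def
  proof (intro ballI)
    fix a b assume a: "a \<in> Egen" and b: "b \<in> Egen"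
    show "a \<inter> b \<in> Egen"
      using a
    proof (rule EgenE)
      fix x assume x: "0 < x" "a = {x<..}"
      show ?thesis using b
      proof (rule EgenE)
        fix y assume y: "0 < y" "b = {y<..}"
        have "a \<inter> b = {max x y<..}" using x y by auto
        thus ?thesis using x by (simp add: EgenI1)
      next
        assume "b \<in> sets borel" "b \<subseteq> {..0}"
        hence "a \<inter> b = {}" using x by auto
        thus ?thesis by (simp add: EgenI2)
      qed
    next
      assume a2: "a \<in> sets borel" "a \<subseteq> {..0}"
      have "b \<in> sets borel" using b by (rule EgenE) auto
      thus ?thesis using a2 by (intro EgenI2) auto
    qed
  qed
  show "Egen \<subseteq> Pow UNIV" by simp
  show "sets M = sigma_sets UNIV Egen" "sets N = sigma_sets UNIV Egen" using sets Egen_sigma by auto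
  show "range (\<lambda>i. if i = 0 then {..0} else {inverse (real i)<..}) \<subseteq> Egen"
  proof (rule subsetI, clarify)
    fix i :: nat
    show "(if i = 0 then {..0} else {inverse (real i)<..}) \<in> Egen"
    proof (cases "i = 0")
      case True thus ?thesis by (simp add: EgenI2)
    next
      case False
      hence "0 < inverse (real i)" by simp
      hence "{inverse (real i)<..} \<in> Egen" by (rule EgenI1)
      thus ?thesis using False by simp
    qed
  qed
  show "(\<Union>i. if i = 0 then {..0} else {inverse (real i)<..}) = UNIV"
  proof (intro equalityI subsetI)
    fix x :: real assume "x \<in> UNIV"
    show "x \<in> (\<Union>i. if i = 0 then {..0} else {inverse (real i)<..})"
    proof (cases "0 < x")
      case True
      then obtain n where "n > 0" "inverse (real n) < x" using ex_inverse_of_nat_less[of x] by auto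
      thus ?thesis by (intro UN_I[of n]) auto
    next
      case False thus ?thesis by (intro UN_I[of 0]) auto
    qed
  qed simp
  show "emeasure M (if i = 0 then {..0} else {inverse (real i)<..}) \<noteq> \<infinity>" for i
  proof (cases "i = 0")
    case True thus ?thesis using zero[of "{..0}"] by simp
  next
    case False
    hence "0 < inverse (real i)" by simp
    from fin[OF this] False show ?thesis by simp
  qed
  fix X assume "X \<in> Egen"
  thus "emeasure M X = emeasure N X"
  proof (rule EgenE)
    fix x assume "0 < x" "X = {x<..}" thus ?thesis using eq by simp
  next
    assume "X \<in> sets borel" "X \<subseteq> {..0}" thus ?thesis using zero by simp
  qed
qed



lemma levy_density_m_meas[measurable]: "levy_density_m d m \<in> borel_measurable borel"
  unfolding levy_density_m_def by measurable

lemma levy_density_0_meas[measurable]: "levy_density_0 d \<in> borel_measurable borel"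
  unfolding levy_density_0_def by measurable

lemma space_rhom[simp]: "space (rhom d) = UNIV" by (simp add: rhom_def)

context
  fixes d :: nat and m :: real
  assumes d: "1 \<le> d" and m: "0 < m"
begin

definition "nu = (real d + 1) / 2"
definition "Ad = 2 powr ((real d - 1)/2) * Gamma nu"
definition "cm = 2 * real d * (m / (2*pi)) powr nu"
definition "c0 = real d * Gamma nu / pi powr nu"
definition "Hf = H nu m Ad"
definition "Wm r = (if r = 0 then 0 else ennreal (levy_density_m d m r))"
definition "W0 r = (if r = 0 then 0 else ennreal (levy_density_0 d r))"

lemma nu1: "1 \<le> nu" using d by (simp add: nu_def)
lemma Ad_pos: "0 < Ad" using nu1 by (simp add: Ad_def)

lemma l_fun_eq: "l_fun d m = lf nu m Ad"
proof
  fix r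
  have e: "(real d - 3)/2 = nu - 2" by (simp add: nu_def field_simps)
  show "l_fun d m r = lf nu m Ad r"
    unfolding l_fun_def lf_def[OF nu1 m Ad_pos] Ireal_def gfun_def e
    by (simp add: Ad_def nu_def)
qed

lemma Hf_meas[measurable]: "Hf \<in> borel_measurable borel"
  unfolding Hf_def by (rule borel_measurable_mono[OF H_mono[OF nu1 m Ad_pos]])

lemma Wm_meas[measurable]: "Wm \<in> borel_measurable borel"
  unfolding Wm_def by measurable
lemma W0_meas[measurable]: "W0 \<in> borel_measurable borel"
  unfolding W0_def by measurable

lemma dens_Wm:
  assumes "0 < r"
  shows "real d * r^(d-1) * levy_density_m d m r = cm * gfun nu m r"
proof -
  have p0: "real (d-1) = real d - 1" using d by (simp add: of_nat_diff)
  have p: "r^(d-1) = r powr (real d - 1)" using powr_realpow[OF assms, of "d-1"] p0 by simp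
  have q: "r powr (real d - 1) / r powr nu = r powr (nu - 2)"
    using assms by (simp add: powr_diff[symmetric] nu_def field_simps)
  have "real d * r^(d-1) * levy_density_m d m r
      = (2 * real d * (m / (2*pi)) powr nu) * (r powr (real d - 1) / r powr nu) * besselK nu (m*r)"
    unfolding levy_density_m_def p nu_def by (simp add: field_simps)
  also have "\<dots> = cm * gfun nu m r" unfolding q cm_def gfun_def by simp
  finally show ?thesis .
qed

lemma dens_W0:
  assumes "0 < r"
  shows "real d * r^(d-1) * levy_density_0 d r = c0 * r powr (-2)"
proof -
  have p0: "real (d-1) = real d - 1" using d by (simp add: of_nat_diff)
  have p: "r^(d-1) = r powr (real d - 1)" using powr_realpow[OF assms, of "d-1"] p0 by simp
  have q: "r powr (real d - 1) * r powr (- (real d + 1)) = r powr (-2)"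
    using assms by (simp add: powr_add[symmetric])
  have "real d * r^(d-1) * levy_density_0 d r
      = (real d * Gamma nu / pi powr nu) * (r powr (real d - 1) * r powr (- (real d + 1)))"
    unfolding levy_density_0_def p nu_def by (simp add: field_simps)
  also have "\<dots> = c0 * r powr (-2)" unfolding q c0_def by simp
  finally show ?thesis .
qed

lemma levy_density_m_nonneg: "0 < r \<Longrightarrow> 0 \<le> levy_density_m d m r"
  unfolding levy_density_m_def using m by (simp add: besselK_nonneg)

lemma levy_density_0_nonneg: "0 \<le> levy_density_0 d r"
  unfolding levy_density_0_def by simp

lemma emeasure_dens_rhom:
  assumes [measurable]: "W \<in> borel_measurable borel" "S \<in> sets borel"
  shows "emeasure (density (rhom d) W) S
    = (\<integral>\<^sup>+ r. ennreal (if 0 < r then real d * r^(d-1) else 0) * (W r * indicator S r) \<partial>lborel)"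
  unfolding rhom_def by (subst emeasure_density) (auto simp: nn_integral_density)


lemma cm_pos: "0 < cm" using m d by (simp add: cm_def)
lemma c0_pos: "0 < c0" using d nu1 by (simp add: c0_def)

lemma Nm_Ioi:
  assumes x: "0 < x"
  shows "emeasure (density (rhom d) Wm) {x<..} = ennreal (cm * Ireal nu m x)"
proof -
  have "emeasure (density (rhom d) Wm) {x<..}
     = (\<integral>\<^sup>+ r. ennreal cm * ennreal (indicator {x<..} r * gfun nu m r) \<partial>lborel)"
    unfolding emeasure_dens_rhom[OF Wm_meas, of "{x<..}", simplified]
  proof (intro nn_integral_cong)
    fix r :: real
    show "ennreal (if 0 < r then real d * r^(d-1) else 0) * (Wm r * indicator {x<..} r)
        = ennreal cm * ennreal (indicator {x<..} r * gfun nu m r)"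
    proof (cases "x < r")
      case True
      hence r: "0 < r" using x by simp
      have "ennreal (real d * r^(d-1)) * ennreal (levy_density_m d m r)
          = ennreal (real d * r^(d-1) * levy_density_m d m r)"
        using r levy_density_m_nonneg[OF r] by (simp add: ennreal_mult)
      also have "\<dots> = ennreal cm * ennreal (gfun nu m r)"
        using dens_Wm[OF r] cm_pos by (simp add: ennreal_mult gfun_nonneg)
      finally show ?thesis using True r by (simp add: Wm_def)
    qed simp
  qed
  also have "\<dots> = ennreal cm * Ie nu m x"
    unfolding Ie_def by (rule nn_integral_cmult) simp
  also have "Ie nu m x = ennreal (Ireal nu m x)" by (simp add: ennreal_Ireal[OF nu1 m x])
  also have "ennreal cm * ennreal (Ireal nu m x) = ennreal (cm * Ireal nu m x)"
    using Ireal_pos[OF nu1 m x] cm_pos by (simp add: ennreal_mult)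
  finally show ?thesis .
qed

lemma N0_Ioi:
  assumes y: "0 < y"
  shows "emeasure (density (rhom d) W0) {y<..} = ennreal (c0 / y)"
proof -
  have "emeasure (density (rhom d) W0) {y<..}
     = (\<integral>\<^sup>+ r. ennreal c0 * ennreal (indicator {y<..} r * r powr (-2)) \<partial>lborel)"
    unfolding emeasure_dens_rhom[OF W0_meas, of "{y<..}", simplified]
  proof (intro nn_integral_cong)
    fix r :: real
    show "ennreal (if 0 < r then real d * r^(d-1) else 0) * (W0 r * indicator {y<..} r)
        = ennreal c0 * ennreal (indicator {y<..} r * r powr (-2))"
    proof (cases "y < r")
      case True
      hence r: "0 < r" using y by simp
      have "ennreal (real d * r^(d-1)) * ennreal (levy_density_0 d r)
          = ennreal (real d * r^(d-1) * levy_density_0 d r)"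
        using r levy_density_0_nonneg[of r] by (simp add: ennreal_mult)
      also have "\<dots> = ennreal c0 * ennreal (r powr (-2))"
        using dens_W0[OF r] c0_pos by (simp add: ennreal_mult)
      finally show ?thesis using True r by (simp add: W0_def)
    qed simp
  qed
  also have "\<dots> = ennreal c0 * ennreal (1/y)"
    by (subst nn_integral_cmult) (auto simp: nn_integral_powr_m2[OF y])
  also have "\<dots> = ennreal (c0 / y)"
    using c0_pos y by (simp add: ennreal_mult[symmetric])
  finally show ?thesis .
qed

lemma dens_zero:
  assumes [measurable]: "W \<in> borel_measurable borel" "S \<in> sets borel" and S: "S \<subseteq> {..0}"
  shows "emeasure (density (rhom d) W) S = 0"
proof -
  have "(\<lambda>r. ennreal (if 0 < r then real d * r^(d-1) else 0) * (W r * indicator S r)) = (\<lambda>_. 0)"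
    using S by (auto simp: fun_eq_iff indicator_def)
  thus ?thesis by (simp add: emeasure_dens_rhom)
qed

lemma Hf_pos: "0 < r \<Longrightarrow> 0 < Hf r"
  unfolding Hf_def using H_prop(1)[OF nu1 m Ad_pos] .

lemma Hf_nonpos: "\<not> 0 < r \<Longrightarrow> Hf r = 0"
  unfolding Hf_def by (simp add: H_def[OF nu1 m Ad_pos])

lemma Hf_vimage_Ioi:
  assumes x: "0 < x" shows "Hf -` {x<..} = {lf nu m Ad x<..}"
proof (intro equalityI subsetI)
  fix r assume "r \<in> Hf -` {x<..}"
  hence r: "x < Hf r" by simp
  hence "0 < r" using x Hf_nonpos[of r] by (cases "0 < r") auto
  thus "r \<in> {lf nu m Ad x<..}" using H_gt_iff[OF nu1 m Ad_pos \<open>0 < r\<close> x] r by (simp add: Hf_def)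
next
  fix r assume "r \<in> {lf nu m Ad x<..}"
  hence r: "lf nu m Ad x < r" by simp
  have "0 < r" using lf_pos[OF nu1 m Ad_pos x] r by simp
  thus "r \<in> Hf -` {x<..}" using H_gt_iff[OF nu1 m Ad_pos \<open>0 < r\<close> x] r by (simp add: Hf_def)
qed

lemma const_eq: "cm * Ad = c0 * m powr nu"
proof -
  have e: "nu = 1 + (real d - 1)/2" by (simp add: nu_def field_simps)
  have "2 powr nu = 2 * 2 powr ((real d - 1)/2)"
    unfolding e by (simp add: powr_add)
  moreover have "(m / (2*pi)) powr nu = m powr nu / (2 powr nu * pi powr nu)"
    using m by (simp add: powr_divide powr_mult)
  ultimately show ?thesis unfolding cm_def Ad_def c0_def
    by (simp add: field_simps)
qed

lemma measure_1d: "density (rhom d) Wm = distr (density (rhom d) W0) borel Hf"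
proof (rule real_measure_eqI_Egen)
  show "sets (density (rhom d) Wm) = sets borel" "sets (distr (density (rhom d) W0) borel Hf) = sets borel"
    by simp_all
next
  fix S :: "real set" assume S[measurable]: "S \<in> sets borel" "S \<subseteq> {..0}"
  have "emeasure (distr (density (rhom d) W0) borel Hf) S = emeasure (density (rhom d) W0) (Hf -` S)"
    by (subst emeasure_distr) auto
  also have "\<dots> = 0"
  proof (rule dens_zero)
    show "Hf -` S \<subseteq> {..0}"
    proof
      fix r assume "r \<in> Hf -` S"
      hence "Hf r \<le> 0" using S by auto
      thus "r \<in> {..0}" using Hf_pos[of r] by (cases "0 < r") auto
    qed
  qed (use measurable_sets[OF Hf_meas S(1)] in auto)
  finally show "emeasure (density (rhom d) Wm) S = 0 \<and> emeasure (distr (density (rhom d) W0) borel Hf) S = 0"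
    using dens_zero[OF Wm_meas S] by simp
next
  fix x :: real assume x: "0 < x"
  show "emeasure (density (rhom d) Wm) {x<..} < \<infinity>" by (simp add: Nm_Ioi[OF x])
  have lx: "0 < lf nu m Ad x" by (rule lf_pos[OF nu1 m Ad_pos x])
  have I: "0 < Ireal nu m x" by (rule Ireal_pos[OF nu1 m x])
  have "emeasure (distr (density (rhom d) W0) borel Hf) {x<..} = emeasure (density (rhom d) W0) (Hf -` {x<..})"
    by (subst emeasure_distr) auto
  also have "\<dots> = ennreal (c0 / lf nu m Ad x)" by (simp add: Hf_vimage_Ioi[OF x] N0_Ioi[OF lx])
  also have "c0 / lf nu m Ad x = cm * Ireal nu m x"
  proof -
    have "c0 / lf nu m Ad x = c0 * m powr nu * Ireal nu m x / Ad"
      unfolding lf_def[OF nu1 m Ad_pos] using Ad_pos m I by (simp add: field_simps)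
    also have "\<dots> = cm * Ireal nu m x" using const_eq[symmetric] Ad_pos by (simp add: field_simps)
    finally show ?thesis .
  qed
  finally show "emeasure (density (rhom d) Wm) {x<..} = emeasure (distr (density (rhom d) W0) borel Hf) {x<..}"
    by (simp add: Nm_Ioi[OF x])
qed

end


lemma norm_sgn_scale: "norm z *\<^sub>R sgn z = (z :: 'a::real_normed_vector)"
  by (cases "z = 0") (simp_all add: sgn_div_norm)

theorem mainTheorem7:
  fixes m :: real and B :: "'a::euclidean_space set"
  assumes "m > 0" and "B \<in> sets borel" and "B \<subseteq> UNIV - {0}"
  shows "emeasure (levy_m m) B
           = emeasure (levy_0 :: 'a measure) {z \<in> UNIV - {0}. phi_fun m z \<in> B}"
proof -
  have m: "0 < m" using assms by simp
  have d1: "1 \<le> DIM('a)" by (simp add: DIM_positive Suc_le_eq)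
  have [measurable]: "B \<in> sets borel" using assms by simp
  have [measurable]: "Wm DIM('a) m \<in> borel_measurable borel" by (rule Wm_meas[OF d1 m])
  have [measurable]: "W0 DIM('a) \<in> borel_measurable borel" by (rule W0_meas[OF d1 m])
  have [measurable]: "Hf DIM('a) m \<in> borel_measurable borel" by (rule Hf_meas[OF d1 m])
  let ?R = "rhom DIM('a)"
  have L: "emeasure (levy_m m) B = (\<integral>\<^sup>+ u. (\<integral>\<^sup>+ r. Wm DIM('a) m r * indicator B (r *\<^sub>R u) \<partial>?R) \<partial>(sigm :: 'a measure))"
  proof -
    have "emeasure (levy_m m) B = (\<integral>\<^sup>+ z. (if z = 0 then 0 else ennreal (levy_density_m DIM('a) m (norm z))) * indicator B z \<partial>(lborel :: 'a measure))"
      unfolding levy_m_def by (subst emeasure_density) auto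
    also have "\<dots> = (\<integral>\<^sup>+ z. (\<lambda>p. Wm DIM('a) m (fst p) * indicator B (fst p *\<^sub>R snd p)) (norm z, sgn z) \<partial>(lborel :: 'a measure))"
      by (intro nn_integral_cong) (simp add: Wm_def[OF d1 m] norm_sgn_scale)
    also have "\<dots> = (\<integral>\<^sup>+ u. (\<integral>\<^sup>+ r. Wm DIM('a) m r * indicator B (r *\<^sub>R u) \<partial>?R) \<partial>(sigm :: 'a measure))"
      by (subst polar_nn_integral) auto
    finally show ?thesis .
  qed
  have phi: "phi_fun m z = Hf DIM('a) m (norm z) *\<^sub>R sgn z" if "z \<noteq> 0" for z :: 'a
  proof -
    have n: "0 < norm z" using that by simp
    have "inv_into {0<..} (l_fun DIM('a) m) (norm z) = Hf DIM('a) m (norm z)"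
      using n unfolding l_fun_eq[OF d1 m] Hf_def[OF d1 m] H_def[OF nu1[OF d1 m] m Ad_pos[OF d1 m]] by simp
    thus ?thesis using that unfolding phi_fun_def by (simp add: sgn_div_norm divide_inverse)
  qed
  define S where "S = {z \<in> UNIV - {0}. phi_fun m z \<in> B}"
  have S_eq: "S = {z :: 'a. z \<noteq> 0 \<and> Hf DIM('a) m (norm z) *\<^sub>R sgn z \<in> B}"
    unfolding S_def using phi by auto
  have [measurable]: "S \<in> sets borel" unfolding S_eq by measurable
  have R: "emeasure (levy_0 :: 'a measure) S = (\<integral>\<^sup>+ u. (\<integral>\<^sup>+ r. W0 DIM('a) r * indicator B (Hf DIM('a) m r *\<^sub>R u) \<partial>?R) \<partial>(sigm :: 'a measure))"
  proof -
    have "emeasure (levy_0 :: 'a measure) S = (\<integral>\<^sup>+ z. (if z = 0 then 0 else ennreal (levy_density_0 DIM('a) (norm z))) * indicator S z \<partial>(lborel :: 'a measure))"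
      unfolding levy_0_def by (subst emeasure_density) auto
    also have "\<dots> = (\<integral>\<^sup>+ z. (\<lambda>p. W0 DIM('a) (fst p) * indicator B (Hf DIM('a) m (fst p) *\<^sub>R snd p)) (norm z, sgn z) \<partial>(lborel :: 'a measure))"
      by (intro nn_integral_cong) (auto simp: W0_def[OF d1 m] S_eq indicator_def)
    also have "\<dots> = (\<integral>\<^sup>+ u. (\<integral>\<^sup>+ r. W0 DIM('a) r * indicator B (Hf DIM('a) m r *\<^sub>R u) \<partial>?R) \<partial>(sigm :: 'a measure))"
      by (subst polar_nn_integral) auto
    finally show ?thesis .
  qed
  have inner: "(\<integral>\<^sup>+ r. Wm DIM('a) m r * indicator B (r *\<^sub>R u) \<partial>?R) = (\<integral>\<^sup>+ r. W0 DIM('a) r * indicator B (Hf DIM('a) m r *\<^sub>R u) \<partial>?R)" for u :: 'a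
  proof -
    define C where "C = (\<lambda>r::real. r *\<^sub>R u) -` B"
    have fm: "(\<lambda>r::real. r *\<^sub>R u) \<in> borel_measurable borel" by measurable
    have Cm[measurable]: "C \<in> sets borel" unfolding C_def
      by (rule measurable_sets_borel[OF fm assms(2)])
    have iC: "indicator C r = indicator B (r *\<^sub>R u)" for r :: real by (simp add: C_def indicator_def)
    have iHC: "indicator (Hf DIM('a) m -` C) r = indicator B (Hf DIM('a) m r *\<^sub>R u)" for r :: real
      by (simp add: C_def indicator_def)
    have HC: "Hf DIM('a) m -` C \<in> sets borel" by (rule measurable_sets_borel[OF Hf_meas[OF d1 m] Cm])
    have "emeasure (density ?R (Wm DIM('a) m)) C = (\<integral>\<^sup>+ r. Wm DIM('a) m r * indicator C r \<partial>?R)"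
      by (rule emeasure_density) auto
    hence "(\<integral>\<^sup>+ r. Wm DIM('a) m r * indicator B (r *\<^sub>R u) \<partial>?R) = emeasure (density ?R (Wm DIM('a) m)) C"
      by (simp add: iC)
    also have "\<dots> = emeasure (distr (density ?R (W0 DIM('a))) borel (Hf DIM('a) m)) C"
      by (simp only: measure_1d[OF d1 m])
    also have "\<dots> = emeasure (density ?R (W0 DIM('a))) (Hf DIM('a) m -` C)"
      by (subst emeasure_distr) auto
    also have "\<dots> = (\<integral>\<^sup>+ r. W0 DIM('a) r * indicator (Hf DIM('a) m -` C) r \<partial>?R)"
      by (rule emeasure_density) (use HC in auto)
    also have "\<dots> = (\<integral>\<^sup>+ r. W0 DIM('a) r * indicator B (Hf DIM('a) m r *\<^sub>R u) \<partial>?R)"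
      by (simp add: iHC)
    finally show ?thesis .
  qed
  show ?thesis using L R inner S_def by simp
qed

end
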